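(* There exist two tDCWs $\mathcal{D}_1,\mathcal{D}_2$ with $L(\mathcal{D}_1)=L(\mathcal{D}_2)$ that are both nice and minimal (no tDCW recognizing the same language has fewer states) and that are not isomorphic. Likewise, there exist two tDBWs recognizing the same language, both nice and minimal among tDBWs for that language, that are not isomorphic.
   Context: A tNCW is $\mathcal{A}=\langle\Sigma,Q,q_0,\delta,\alpha\rangle$: finite alphabet $\Sigma$, finite state set $Q$, initial state $q_0$, transition function $\delta:Q\times\Sigma\to 2^Q\setminus\{\emptyset\}$ with transition relation $\Delta=\{\langle q,\sigma,s\rangle:s\in\delta(q,\sigma)\}$, and $\alpha\subseteq\Delta$; its size is $|Q|$. $\alpha$-transitions are those in $\alpha$, $\bar\alpha$-transitions those in $\Delta\setminus\alpha$; $\delta^{\alpha}(q,\sigma)$, $\delta^{\bar\alpha}(q,\sigma)$ denote the $\sigma$-successors via $\alpha$-, resp. $\bar\alpha$-transitions. A run on $w=\sigma_1\sigma_2\cdots$ is $r_0r_1\cdots$ with $r_0=q_0$, $r_{i+1}\in\delta(r_i,\sigma_{i+1})$; it is accepting (co-Büchi) iff it traverses $\alpha$-transitions only finitely often. A tDCW is a tNCW with $|\delta(q,\sigma)|=1$ for all $q,\sigma$. A tDBW has the same syntax as a tDCW but a run is accepting iff it traverses $\alpha$-transitions infinitely often. $\mathcal{A}^q$ is $\mathcal{A}$ with initial state $q$; $q\sim s$ iff $L(\mathcal{A}^q)=L(\mathcal{A}^s)$. GFG: there is $f:\Sigma^*\to Q$ with $f(\epsilon)=q_0$, $\langle f(u),\sigma,f(u\sigma)\rangle\in\Delta$,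 and $f$'s run on every accepted word accepting; $q$ is GFG if $\mathcal{A}^q$ is. Nice: all states reachable and GFG, semantically deterministic (all $\sigma$-successors of a state pairwise $\sim$), safe deterministic ($|\delta^{\bar\alpha}(q,\sigma)|\le1$), and normal (a path of $\bar\alpha$-transitions from $q$ to $s$ implies one from $s$ to $q$); these notions are applied to tDBWs with the same structural meaning. For automata $\mathcal{A},\mathcal{B}$ with state sets $Q_\mathcal{A},Q_\mathcal{B}$, they are isomorphic if there is a bijection $\kappa:Q_\mathcal{A}\to Q_\mathcal{B}$ such that for all $q,q'\in Q_\mathcal{A}$ and $\sigma$: $q'\in\delta^{\bar\alpha}_\mathcal{A}(q,\sigma)$ iff $\kappa(q')\in\delta^{\bar\alpha}_\mathcal{B}(\kappa(q),\sigma)$, and $q'\in\delta^{\alpha}_\mathcal{A}(q,\sigma)$ iff $\kappa(q')\in\delta^{\alpha}_\mathcal{B}(\kappa(q),\sigma)$. *)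

theory Defs
  imports Main
begin

text \<open>The transition relation
Delta and the set alpha of alpha-transitions are sets of triples (q, sigma, s).\<close>

record aut =
  alph   :: "nat set"
  states :: "nat set"
  init   :: nat
  trans  :: "(nat \<times> nat \<times> nat) set"
  acc    :: "(nat \<times> nat \<times> nat) set"

datatype cond = CoBuchi | Buchi

definition delta :: "aut \<Rightarrow> nat \<Rightarrow> nat \<Rightarrow> nat set" where
  "delta A q a = {s. (q, a, s) \<in> trans A}"

definition delta_acc :: "aut \<Rightarrow> nat \<Rightarrow> nat \<Rightarrow> nat set" where
  "delta_acc A q a = {s. (q, a, s) \<in> trans A \<and> (q, a, s) \<in> acc A}"

definition delta_nacc :: "aut \<Rightarrow> nat \<Rightarrow> nat \<Rightarrow> nat set" where
  "delta_nacc A q a = {s. (q, a, s) \<in> trans A \<and> (q, a, s) \<notin> acc A}"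

definition wf_aut :: "aut \<Rightarrow> bool" where
  "wf_aut A \<longleftrightarrow> finite (alph A) \<and> finite (states A) \<and> init A \<in> states A \<and>
     trans A \<subseteq> states A \<times> alph A \<times> states A \<and>
     (\<forall>q\<in>states A. \<forall>a\<in>alph A. delta A q a \<noteq> {}) \<and>
     acc A \<subseteq> trans A"

definition deterministic :: "aut \<Rightarrow> bool" where
  "deterministic A \<longleftrightarrow> wf_aut A \<and>
     (\<forall>q\<in>states A. \<forall>a\<in>alph A. card (delta A q a) = 1)"

definition is_word :: "aut \<Rightarrow> (nat \<Rightarrow> nat) \<Rightarrow> bool" where
  "is_word A w \<longleftrightarrow> (\<forall>i. w i \<in> alph A)"

definition is_run :: "aut \<Rightarrow> (nat \<Rightarrow> nat) \<Rightarrow> (nat \<Rightarrow> nat) \<Rightarrow> bool" where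
  "is_run A w r \<longleftrightarrow> r 0 = init A \<and> (\<forall>i. (r i, w i, r (Suc i)) \<in> trans A)"

definition accepting :: "cond \<Rightarrow> aut \<Rightarrow> (nat \<Rightarrow> nat) \<Rightarrow> (nat \<Rightarrow> nat) \<Rightarrow> bool" where
  "accepting c A w r \<longleftrightarrow>
     (case c of
        CoBuchi \<Rightarrow> finite {i. (r i, w i, r (Suc i)) \<in> acc A}
      | Buchi \<Rightarrow> infinite {i. (r i, w i, r (Suc i)) \<in> acc A})"

definition lang :: "cond \<Rightarrow> aut \<Rightarrow> (nat \<Rightarrow> nat) set" where
  "lang c A = {w. is_word A w \<and> (\<exists>r. is_run A w r \<and> accepting c A w r)}"

definition from_state :: "aut \<Rightarrow> nat \<Rightarrow> aut" where
  "from_state A q = A\<lparr>init := q\<rparr>"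

definition equiv_states :: "cond \<Rightarrow> aut \<Rightarrow> nat \<Rightarrow> nat \<Rightarrow> bool" where
  "equiv_states c A q s \<longleftrightarrow> lang c (from_state A q) = lang c (from_state A s)"

definition gfg :: "cond \<Rightarrow> aut \<Rightarrow> bool" where
  "gfg c A \<longleftrightarrow> (\<exists>f :: nat list \<Rightarrow> nat.
     f [] = init A \<and>
     (\<forall>u a. set u \<subseteq> alph A \<longrightarrow> a \<in> alph A \<longrightarrow> (f u, a, f (u @ [a])) \<in> trans A) \<and>
     (\<forall>w\<in>lang c A. accepting c A w (\<lambda>i. f (map w [0..<i]))))"

definition reachable :: "aut \<Rightarrow> nat set" where
  "reachable A = {s. (init A, s) \<in> {(q, s). \<exists>a. (q, a, s) \<in> trans A}\<^sup>*}"

definition safe_rel :: "aut \<Rightarrow> (nat \<times> nat) set" where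
  "safe_rel A = {(q, s). \<exists>a. (q, a, s) \<in> trans A \<and> (q, a, s) \<notin> acc A}"

definition nice :: "cond \<Rightarrow> aut \<Rightarrow> bool" where
  "nice c A \<longleftrightarrow>
     (\<forall>q\<in>states A. q \<in> reachable A \<and> gfg c (from_state A q)) \<and>
     (\<forall>q\<in>states A. \<forall>a\<in>alph A. \<forall>s\<in>delta A q a. \<forall>s'\<in>delta A q a. equiv_states c A s s') \<and>
     (\<forall>q\<in>states A. \<forall>a\<in>alph A. card (delta_nacc A q a) \<le> 1) \<and>
     (\<forall>q s. (q, s) \<in> (safe_rel A)\<^sup>* \<longrightarrow> (s, q) \<in> (safe_rel A)\<^sup>*)"

definition minimal_det :: "cond \<Rightarrow> aut \<Rightarrow> bool" where
  "minimal_det c A \<longleftrightarrow> deterministic A \<and>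
     (\<forall>B. deterministic B \<longrightarrow> alph B = alph A \<longrightarrow> lang c B = lang c A \<longrightarrow>
          card (states A) \<le> card (states B))"

definition isomorphic :: "aut \<Rightarrow> aut \<Rightarrow> bool" where
  "isomorphic A B \<longleftrightarrow> (\<exists>\<kappa>. bij_betw \<kappa> (states A) (states B) \<and>
     (\<forall>q\<in>states A. \<forall>q'\<in>states A. \<forall>a.
        (q' \<in> delta_nacc A q a \<longleftrightarrow> \<kappa> q' \<in> delta_nacc B (\<kappa> q) a) \<and>
        (q' \<in> delta_acc A q a \<longleftrightarrow> \<kappa> q' \<in> delta_acc B (\<kappa> q) a)))"

end

theory Submission
  imports Defs
begin

definition ev_const :: "(nat \<Rightarrow> nat) \<Rightarrow> bool" where
  "ev_const w \<longleftrightarrow> (\<exists>N. \<forall>i\<ge>N. w i = 0) \<or> (\<exists>N. \<forall>i\<ge>N. w i = 1)"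

definition detfun :: "aut \<Rightarrow> (nat \<Rightarrow> nat \<Rightarrow> nat) \<Rightarrow> bool" where
  "detfun A st \<longleftrightarrow> (\<forall>q a s. (q,a,s) \<in> trans A \<longleftrightarrow> q \<in> states A \<and> a \<in> alph A \<and> s = st q a)
     \<and> (\<forall>q\<in>states A. \<forall>a\<in>alph A. st q a \<in> states A)"

lemma detfun_from: "detfun A st \<Longrightarrow> detfun (from_state A q) st"
  by (simp add: detfun_def from_state_def)

lemma run_exists:
  assumes "detfun A st" "init A \<in> states A" "is_word A w"
  shows "is_run A w (rec_nat (init A) (\<lambda>i q. st q (w i)))"
proof -
  let ?r = "rec_nat (init A) (\<lambda>i q. st q (w i))"
  have s: "?r i \<in> states A" for i
    by (induction i) (use assms in \<open>auto simp: detfun_def is_word_def\<close>)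
  show ?thesis using s assms unfolding is_run_def detfun_def is_word_def by auto
qed

lemma run_unique:
  assumes "detfun A st" "is_run A w r"
  shows "r i = foldl st (init A) (map w [0..<i])"
proof (induction i)
  case 0 then show ?case using assms by (simp add: is_run_def)
next
  case (Suc i)
  have "(r i, w i, r (Suc i)) \<in> trans A" using assms by (simp add: is_run_def)
  then have "r (Suc i) = st (r i) (w i)" using assms(1) by (simp add: detfun_def)
  then show ?case using Suc by simp
qed

lemma gfg_det:
  assumes "detfun A st" "init A \<in> states A"
  shows "gfg c A"
  unfolding gfg_def
proof (intro exI[of _ "foldl st (init A)"] conjI allI impI ballI)
  show "foldl st (init A) [] = init A" by simp
  have inS: "set u \<subseteq> alph A \<Longrightarrow> foldl st (init A) u \<in> states A" for u
    by (induction u rule: rev_induct) (use assms in \<open>auto simp: detfun_def\<close>)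
  fix u a assume "set u \<subseteq> alph A" "a \<in> alph A"
  then show "(foldl st (init A) u, a, foldl st (init A) (u @ [a])) \<in> trans A"
    using inS assms(1) by (simp add: detfun_def)
next
  fix w assume "w \<in> lang c A"
  then obtain r where r: "is_run A w r" "accepting c A w r" by (auto simp: lang_def)
  have "r = (\<lambda>i. foldl st (init A) (map w [0..<i]))"
    using run_unique[OF assms(1) r(1)] by auto
  then show "accepting c A w (\<lambda>i. foldl st (init A) (map w [0..<i]))" using r by simp
qed

definition accshape :: "aut \<Rightarrow> bool" where
  "accshape A \<longleftrightarrow> (\<forall>q a s. (q,a,s) \<in> trans A \<longrightarrow> (a = 0 \<longrightarrow> s = 0) \<and> (a = 1 \<longrightarrow> s = 1))
    \<and> (\<forall>t\<in>trans A. t \<notin> acc A \<longleftrightarrow> t \<in> {(0,0,0),(1,1,1)})"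

lemma accshapeD:
  assumes "accshape A"
  shows "\<And>q s. (q,0,s) \<in> trans A \<Longrightarrow> s = 0"
    and "\<And>q s. (q,1,s) \<in> trans A \<Longrightarrow> s = 1"
    and "\<And>q a s. (q,a,s) \<in> trans A \<Longrightarrow> (q,a,s) \<notin> acc A \<Longrightarrow> (q = 0 \<and> a = 0 \<and> s = 0) \<or> (q = 1 \<and> a = 1 \<and> s = 1)"
    and "(0,0,0) \<in> trans A \<Longrightarrow> (0,0,0) \<notin> acc A"
    and "(1,1,1) \<in> trans A \<Longrightarrow> (1,1,1) \<notin> acc A"
proof -
  have A1: "\<forall>q a s. (q,a,s) \<in> trans A \<longrightarrow> (a = 0 \<longrightarrow> s = 0) \<and> (a = 1 \<longrightarrow> s = 1)"
   and A2: "\<forall>t\<in>trans A. t \<notin> acc A \<longleftrightarrow> t \<in> {(0,0,0),(1,1,1)}"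
    using assms unfolding accshape_def by simp_all
  show "\<And>q s. (q,0,s) \<in> trans A \<Longrightarrow> s = 0" using A1 by simp
  show "\<And>q s. (q,1,s) \<in> trans A \<Longrightarrow> s = 1" using A1 by simp
  show "\<And>q a s. (q,a,s) \<in> trans A \<Longrightarrow> (q,a,s) \<notin> acc A \<Longrightarrow> (q = 0 \<and> a = 0 \<and> s = 0) \<or> (q = 1 \<and> a = 1 \<and> s = 1)"
  proof -
    fix q a s assume "(q,a,s) \<in> trans A" "(q,a,s) \<notin> acc A"
    then have "(q,a,s) \<in> {(0,0,0),(1,1,1)}" using A2 by simp
    then show "(q = 0 \<and> a = 0 \<and> s = 0) \<or> (q = 1 \<and> a = 1 \<and> s = 1)" by simp
  qed
  show "(0,0,0) \<in> trans A \<Longrightarrow> (0,0,0) \<notin> acc A" using A2 by simp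
  show "(1,1,1) \<in> trans A \<Longrightarrow> (1,1,1) \<notin> acc A" using A2 by simp
qed

lemma acc_char:
  assumes as: "accshape A" and ru: "is_run A w r"
  shows "finite {i. (r i, w i, r (Suc i)) \<in> acc A} \<longleftrightarrow> ev_const w"
proof
  have tr: "(r i, w i, r (Suc i)) \<in> trans A" for i using ru by (simp add: is_run_def)
  assume "finite {i. (r i, w i, r (Suc i)) \<in> acc A}"
  then obtain N where N: "\<forall>i\<in>{i. (r i, w i, r (Suc i)) \<in> acc A}. i < N"
    unfolding finite_nat_set_iff_bounded by blast
  have na: "(r i = 0 \<and> w i = 0 \<and> r (Suc i) = 0) \<or> (r i = 1 \<and> w i = 1 \<and> r (Suc i) = 1)"
    if "i \<ge> N" for i
  proof -
    have "(r i, w i, r (Suc i)) \<notin> acc A" using N that by auto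
    then show ?thesis using accshapeD(3)[OF as tr[of i]] by blast
  qed
  have rN: "i \<ge> N \<Longrightarrow> r i = r N" for i
  proof (induction i rule: dec_induct)
    case (step m) then show ?case using na[of m] by auto
  qed simp
  have wN: "i \<ge> N \<Longrightarrow> w i = r N" for i using na[of i] rN[of i] by auto
  have "r N = 0 \<or> r N = 1" using na[of N] by auto
  then show "ev_const w" unfolding ev_const_def
  proof
    assume "r N = 0" then show "(\<exists>N. \<forall>i\<ge>N. w i = 0) \<or> (\<exists>N. \<forall>i\<ge>N. w i = 1)"
      using wN by (intro disjI1 exI[of _ N]) simp
  next
    assume "r N = 1" then show "(\<exists>N. \<forall>i\<ge>N. w i = 0) \<or> (\<exists>N. \<forall>i\<ge>N. w i = 1)"
      using wN by (intro disjI2 exI[of _ N]) simp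
  qed
next
  have tr: "(r i, w i, r (Suc i)) \<in> trans A" for i using ru by (simp add: is_run_def)
  assume "ev_const w"
  then obtain N v where v: "v = 0 \<or> v = 1" and wv: "\<forall>i\<ge>N. w i = v"
    unfolding ev_const_def
  proof (elim disjE exE)
    fix N assume "\<forall>i\<ge>N. w i = 0"
    then show ?thesis using that[of 0 N] by simp
  next
    fix N assume "\<forall>i\<ge>N. w i = 1"
    then show ?thesis using that[of 1 N] by simp
  qed
  have rv: "r i = v" if "i \<ge> Suc N" for i
  proof -
    define j where "j = i - 1"
    have j: "i = Suc j" "j \<ge> N" using that unfolding j_def by auto
    have "w j = v" using wv j by auto
    have t: "(r j, v, r i) \<in> trans A" using tr[of j] j(1) \<open>w j = v\<close> by simp
    from v show ?thesis
    proof
      assume "v = 0" then show ?thesis using accshapeD(1)[OF as, of "r j" "r i"] t by simp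
    next
      assume "v = 1" then show ?thesis using accshapeD(2)[OF as, of "r j" "r i"] t by simp
    qed
  qed
  have "{i. (r i, w i, r (Suc i)) \<in> acc A} \<subseteq> {..<Suc N}"
  proof
    fix i assume i: "i \<in> {i. (r i, w i, r (Suc i)) \<in> acc A}"
    show "i \<in> {..<Suc N}"
    proof (rule ccontr)
      assume "i \<notin> {..<Suc N}"
      then have "i \<ge> Suc N" "Suc i \<ge> Suc N" "i \<ge> N" by auto
      then have e: "r i = v" "r (Suc i) = v" "w i = v" using rv wv by auto
      have "(r i, w i, r (Suc i)) \<in> acc A" using i by simp
      then have a: "(v, v, v) \<in> acc A" and t: "(v, v, v) \<in> trans A" using e tr[of i] by simp_all
      from v show False
      proof
        assume "v = 0" then show False using a t accshapeD(4)[OF as] by simp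
      next
        assume "v = 1" then show False using a t accshapeD(5)[OF as] by simp
      qed
    qed
  qed
  then show "finite {i. (r i, w i, r (Suc i)) \<in> acc A}" using finite_subset by blast
qed

lemma lang_char:
  assumes "detfun A st" "init A \<in> states A" "accshape A"
  shows "lang CoBuchi A = {w. is_word A w \<and> ev_const w}"
    and "lang Buchi A = {w. is_word A w \<and> \<not> ev_const w}"
proof -
  have "w \<in> lang CoBuchi A \<longleftrightarrow> is_word A w \<and> ev_const w" for w
  proof
    assume "w \<in> lang CoBuchi A"
    then obtain r where "is_word A w" "is_run A w r" "finite {i. (r i, w i, r (Suc i)) \<in> acc A}"
      by (auto simp: lang_def accepting_def)
    then show "is_word A w \<and> ev_const w" using acc_char[OF assms(3)] by blast
  next
    assume h: "is_word A w \<and> ev_const w"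
    then have "is_run A w (rec_nat (init A) (\<lambda>i q. st q (w i)))" using run_exists[OF assms(1,2)] by blast
    then show "w \<in> lang CoBuchi A" using h acc_char[OF assms(3)] by (auto simp: lang_def accepting_def)
  qed
  then show "lang CoBuchi A = {w. is_word A w \<and> ev_const w}" by blast
  have "w \<in> lang Buchi A \<longleftrightarrow> is_word A w \<and> \<not> ev_const w" for w
  proof
    assume "w \<in> lang Buchi A"
    then obtain r where "is_word A w" "is_run A w r" "infinite {i. (r i, w i, r (Suc i)) \<in> acc A}"
      by (auto simp: lang_def accepting_def)
    then show "is_word A w \<and> \<not> ev_const w" using acc_char[OF assms(3)] by blast
  next
    assume h: "is_word A w \<and> \<not> ev_const w"
    then have "is_run A w (rec_nat (init A) (\<lambda>i q. st q (w i)))" using run_exists[OF assms(1,2)] by blast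
    then show "w \<in> lang Buchi A" using h acc_char[OF assms(3)] by (auto simp: lang_def accepting_def)
  qed
  then show "lang Buchi A = {w. is_word A w \<and> \<not> ev_const w}" by blast
qed


lemma one_state:
  assumes "deterministic B" "card (states B) < 2"
  obtains q where "states B = {q}" "\<forall>a\<in>alph B. (q,a,q) \<in> trans B"
    "\<And>w r. is_run B w r \<Longrightarrow> r = (\<lambda>_. q)"
    "\<And>w. is_word B w \<Longrightarrow> is_run B w (\<lambda>_. q)"
proof -
  have wf: "wf_aut B" using assms(1) by (simp add: deterministic_def)
  then have "finite (states B)" "init B \<in> states B" by (auto simp: wf_aut_def)
  then have "card (states B) = 1" using assms(2) card_gt_0_iff[of "states B"] by force
  then obtain q where q: "states B = {q}" using card_1_singletonE by blast
  have loop: "\<forall>a\<in>alph B. (q,a,q) \<in> trans B"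
  proof
    fix a assume a: "a \<in> alph B"
    then obtain s where "(q,a,s) \<in> trans B" using wf q by (auto simp: wf_aut_def delta_def)
    moreover then have "s = q" using wf q by (auto simp: wf_aut_def)
    ultimately show "(q,a,q) \<in> trans B" by simp
  qed
  have runs: "r = (\<lambda>_. q)" if "is_run B w r" for w r
  proof
    fix i show "r i = q"
    proof (cases i)
      case 0 then show ?thesis using that q \<open>init B \<in> states B\<close> by (simp add: is_run_def)
    next
      case (Suc j)
      have "(r j, w j, r (Suc j)) \<in> trans B" using that by (simp add: is_run_def)
      then show ?thesis using Suc wf q by (auto simp: wf_aut_def)
    qed
  qed
  have "is_run B w (\<lambda>_. q)" if "is_word B w" for w
    using that loop q \<open>init B \<in> states B\<close> by (simp add: is_run_def is_word_def)
  then show ?thesis using that q loop runs by blast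
qed

lemma alt_not_ev: "\<not> ev_const (\<lambda>i. i mod 2)"
proof
  assume "ev_const (\<lambda>i. i mod 2)"
  then obtain N v where "v = 0 \<or> v = (1::nat)" "\<forall>i\<ge>N. i mod 2 = v" unfolding ev_const_def by blast
  moreover have "(2*N) mod 2 = (0::nat)" "(2*N+1) mod 2 = (1::nat)" by auto
  ultimately show False by (metis le_add1 mult_2 le_add2 trans_le_add1 zero_neq_one)
qed

lemma ev_z: "ev_const (\<lambda>_. 0)" and ev_o: "ev_const (\<lambda>_. 1)"
  unfolding ev_const_def by auto

lemma const_word:
  assumes "alph A = {0,1,2}" "a = 0 \<or> a = 1"
  shows "is_word A (\<lambda>_. a)" "ev_const (\<lambda>_. a)"
proof -
  show "is_word A (\<lambda>_. a)" using assms unfolding is_word_def by auto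
  show "ev_const (\<lambda>_. a)" using assms(2) ev_z ev_o by auto
qed

lemma alt_word: "alph A = {0,1,2} \<Longrightarrow> is_word A (\<lambda>i. i mod 2)"
  unfolding is_word_def by auto

lemma const_set: "(q,a,q) \<in> acc B \<Longrightarrow> infinite {i::nat. ((\<lambda>_. q) i, (\<lambda>_. a) i, (\<lambda>_. q) (Suc i)) \<in> acc B}"
  by simp

lemma alt_set:
  assumes "(q,0,q) \<notin> acc B" "(q,1,q) \<notin> acc B"
  shows "{i::nat. ((\<lambda>_. q) i, i mod 2, (\<lambda>_. q) (Suc i)) \<in> acc B} = {}"
proof -
  have "(q, i mod 2, q) \<notin> acc B" for i::nat
    using assms by (cases "i mod 2 = 0") (simp_all add: mod_2_eq_odd)
  then show ?thesis by simp
qed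

lemma minimal_co:
  assumes L: "lang CoBuchi A = {w. is_word A w \<and> ev_const w}" and al: "alph A = {0,1,2}"
    and d: "deterministic B" "alph B = alph A" "lang CoBuchi B = lang CoBuchi A"
  shows "2 \<le> card (states B)"
proof (rule ccontr)
  assume "\<not> 2 \<le> card (states B)"
  then have c2: "card (states B) < 2" by simp
  obtain q where "states B = {q}" "\<forall>a\<in>alph B. (q,a,q) \<in> trans B"
    and q: "\<And>w r. is_run B w r \<Longrightarrow> r = (\<lambda>_. q)"
    "\<And>w. is_word B w \<Longrightarrow> is_run B w (\<lambda>_. q)"
    by (rule one_state[OF d(1) c2]) (rule that; assumption)
  have alB: "alph B = {0,1,2}" using d(2) al by simp
  have nacc: "(q,a,q) \<notin> acc B" if a: "a = 0 \<or> a = 1" for a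
  proof
    assume ac: "(q,a,q) \<in> acc B"
    have "(\<lambda>_. a) \<in> lang CoBuchi A" unfolding L using const_word[OF al a] by simp
    then have "(\<lambda>_. a) \<in> lang CoBuchi B" using d(3) by simp
    then obtain r where r: "is_run B (\<lambda>_. a) r" "finite {i. (r i, (\<lambda>_. a) i, r (Suc i)) \<in> acc B}"
      unfolding lang_def accepting_def by auto
    have "r = (\<lambda>_. q)" using q(1)[OF r(1)] .
    then show False using r(2) const_set[OF ac] by simp
  qed
  have w: "is_word B (\<lambda>i. i mod 2)" using alt_word[OF alB] .
  have e: "{i::nat. ((\<lambda>_. q) i, i mod 2, (\<lambda>_. q) (Suc i)) \<in> acc B} = {}"
    using alt_set nacc by blast
  have "accepting CoBuchi B (\<lambda>i. i mod 2) (\<lambda>_. q)"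
    unfolding accepting_def using e by simp
  then have "(\<lambda>i. i mod 2) \<in> lang CoBuchi B"
    unfolding lang_def using q(2)[OF w] w by blast
  then have "(\<lambda>i. i mod 2) \<in> lang CoBuchi A" using d(3) by simp
  then show False unfolding L using alt_not_ev by simp
qed

lemma minimal_bu:
  assumes L: "lang Buchi A = {w. is_word A w \<and> \<not> ev_const w}" and al: "alph A = {0,1,2}"
    and d: "deterministic B" "alph B = alph A" "lang Buchi B = lang Buchi A"
  shows "2 \<le> card (states B)"
proof (rule ccontr)
  assume "\<not> 2 \<le> card (states B)"
  then have c2: "card (states B) < 2" by simp
  obtain q where "states B = {q}" "\<forall>a\<in>alph B. (q,a,q) \<in> trans B"
    and q: "\<And>w r. is_run B w r \<Longrightarrow> r = (\<lambda>_. q)"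
    "\<And>w. is_word B w \<Longrightarrow> is_run B w (\<lambda>_. q)"
    by (rule one_state[OF d(1) c2]) (rule that; assumption)
  have alB: "alph B = {0,1,2}" using d(2) al by simp
  have nacc: "(q,a,q) \<notin> acc B" if a: "a = 0 \<or> a = 1" for a
  proof
    assume ac: "(q,a,q) \<in> acc B"
    have wa: "is_word B (\<lambda>_. a)" using const_word[OF alB a] by simp
    have "accepting Buchi B (\<lambda>_. a) (\<lambda>_. q)"
      unfolding accepting_def using const_set[OF ac] by simp
    then have "(\<lambda>_. a) \<in> lang Buchi B"
      unfolding lang_def using q(2)[OF wa] wa by blast
    then have "(\<lambda>_. a) \<in> lang Buchi A" using d(3) by simp
    then show False unfolding L using const_word(2)[OF al a] by simp
  qed
  have w: "is_word A (\<lambda>i. i mod 2)" using alt_word[OF al] .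
  have "(\<lambda>i. i mod 2) \<in> lang Buchi A" unfolding L using alt_not_ev w by simp
  then have "(\<lambda>i. i mod 2) \<in> lang Buchi B" using d(3) by simp
  then obtain r where r: "is_run B (\<lambda>i. i mod 2) r" "infinite {i. (r i, i mod 2, r (Suc i)) \<in> acc B}"
    unfolding lang_def accepting_def by auto
  have "r = (\<lambda>_. q)" using q(1)[OF r(1)] .
  moreover have "{i::nat. ((\<lambda>_. q) i, i mod 2, (\<lambda>_. q) (Suc i)) \<in> acc B} = {}"
    using alt_set nacc by blast
  ultimately show False using r(2) by simp
qed

lemma det_nice:
  assumes df: "detfun A st" and i: "init A \<in> states A" and fin: "finite (alph A)" "finite (states A)"
    and ac: "acc A \<subseteq> trans A" and re: "\<forall>q\<in>states A. q \<in> reachable A"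
    and sf: "safe_rel A \<subseteq> Id"
  shows "deterministic A" "nice c A"
proof -
  have dl: "delta A q a = {st q a}" if "q \<in> states A" "a \<in> alph A" for q a
    using df that by (auto simp: delta_def detfun_def)
  have "trans A \<subseteq> states A \<times> alph A \<times> states A" using df by (auto simp: detfun_def)
  then have "wf_aut A" using fin i ac dl by (auto simp: wf_aut_def)
  then show "deterministic A" using dl by (simp add: deterministic_def)
  have g: "gfg c (from_state A q)" if "q \<in> states A" for q
    using gfg_det[OF detfun_from[OF df]] that by (simp add: from_state_def)
  have sd: "\<forall>q\<in>states A. \<forall>a\<in>alph A. \<forall>s\<in>delta A q a. \<forall>s'\<in>delta A q a. equiv_states c A s s'"
    using dl by (simp add: equiv_states_def)
  have cn: "card (delta_nacc A q a) \<le> 1" if "q \<in> states A" "a \<in> alph A" for q a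
  proof -
    have "delta_nacc A q a \<subseteq> {st q a}" using dl[OF that] by (auto simp: delta_def delta_nacc_def)
    from card_mono[OF _ this] show ?thesis by simp
  qed
  have nr: "(q, s) \<in> (safe_rel A)\<^sup>* \<Longrightarrow> q = s" for q s
    by (induction rule: rtrancl_induct) (use sf in auto)
  show "nice c A" unfolding nice_def
    apply (intro conjI ballI allI impI)
    subgoal for q using re by blast
    subgoal for q using g by blast
    subgoal using sd by blast
    subgoal for q a using cn by blast
    subgoal for q s using nr by blast
    done
qed

definition step1 :: "nat \<Rightarrow> nat \<Rightarrow> nat" where
  "step1 q a = (if a = 0 then 0 else if a = 1 then 1 else q)"
definition step2 :: "nat \<Rightarrow> nat \<Rightarrow> nat" where
  "step2 q a = (if a = 0 then 0 else if a = 1 then 1 else 1 - q)"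

definition D1 :: aut where
  "D1 = \<lparr>alph = {0,1,2}, states = {0,1}, init = 0,
     trans = {(0,0,0),(1,0,0),(0,1,1),(1,1,1),(0,2,0),(1,2,1)},
     acc = {(1,0,0),(0,1,1),(0,2,0),(1,2,1)}\<rparr>"
definition D2 :: aut where
  "D2 = \<lparr>alph = {0,1,2}, states = {0,1}, init = 0,
     trans = {(0,0,0),(1,0,0),(0,1,1),(1,1,1),(0,2,1),(1,2,0)},
     acc = {(1,0,0),(0,1,1),(0,2,1),(1,2,0)}\<rparr>"

lemma df1: "detfun D1 step1" unfolding detfun_def D1_def step1_def by auto
lemma df2: "detfun D2 step2" unfolding detfun_def D2_def step2_def by auto
lemma as1: "accshape D1" unfolding accshape_def D1_def by auto
lemma as2: "accshape D2" unfolding accshape_def D2_def by auto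

lemma reach1: "\<forall>q\<in>states D1. q \<in> reachable D1"
  unfolding reachable_def D1_def by (auto intro!: r_into_rtrancl)
lemma reach2: "\<forall>q\<in>states D2. q \<in> reachable D2"
  unfolding reachable_def D2_def by (auto intro!: r_into_rtrancl)
lemma sf1: "safe_rel D1 \<subseteq> Id" unfolding safe_rel_def D1_def by auto
lemma sf2: "safe_rel D2 \<subseteq> Id" unfolding safe_rel_def D2_def by auto

lemma i1: "init D1 \<in> states D1" and i2: "init D2 \<in> states D2" by (auto simp: D1_def D2_def)
lemma fin1: "finite (alph D1)" "finite (states D1)" "acc D1 \<subseteq> trans D1" by (auto simp: D1_def)
lemma fin2: "finite (alph D2)" "finite (states D2)" "acc D2 \<subseteq> trans D2" by (auto simp: D2_def)

lemma noniso: "\<not> isomorphic D1 D2"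
proof
  assume "isomorphic D1 D2"
  then obtain k where k: "bij_betw k (states D1) (states D2)"
    "\<forall>q\<in>states D1. \<forall>q'\<in>states D1. \<forall>a.
        (q' \<in> delta_acc D1 q a \<longleftrightarrow> k q' \<in> delta_acc D2 (k q) a)"
    unfolding isomorphic_def by blast
  have "0 \<in> delta_acc D1 0 2" by (simp add: delta_acc_def D1_def)
  then have "k 0 \<in> delta_acc D2 (k 0) 2" using k(2) by (auto simp: D1_def)
  moreover have "k 0 \<in> {0,1}" using k(1) by (auto simp: bij_betw_def D1_def D2_def)
  ultimately show False by (auto simp: delta_acc_def D2_def)
qed


lemma L1: "lang CoBuchi D1 = {w. is_word D1 w \<and> ev_const w}" "lang Buchi D1 = {w. is_word D1 w \<and> \<not> ev_const w}"
  using lang_char[OF df1 i1 as1] by auto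
lemma L2: "lang CoBuchi D2 = {w. is_word D2 w \<and> ev_const w}" "lang Buchi D2 = {w. is_word D2 w \<and> \<not> ev_const w}"
  using lang_char[OF df2 i2 as2] by auto
lemma al: "alph D1 = {0,1,2}" "alph D2 = {0,1,2}" "card (states D1) = 2" "card (states D2) = 2"
  by (auto simp: D1_def D2_def)
lemma wd: "is_word D1 = is_word D2" by (rule ext) (simp add: is_word_def al)

theorem mainTheorem12:
  shows "(\<exists>D1 D2. deterministic D1 \<and> deterministic D2 \<and> alph D1 = alph D2 \<and>
            lang CoBuchi D1 = lang CoBuchi D2 \<and>
            nice CoBuchi D1 \<and> nice CoBuchi D2 \<and>
            minimal_det CoBuchi D1 \<and> minimal_det CoBuchi D2 \<and>
            \<not> isomorphic D1 D2) \<and>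
         (\<exists>D1 D2. deterministic D1 \<and> deterministic D2 \<and> alph D1 = alph D2 \<and>
            lang Buchi D1 = lang Buchi D2 \<and>
            nice Buchi D1 \<and> nice Buchi D2 \<and>
            minimal_det Buchi D1 \<and> minimal_det Buchi D2 \<and>
            \<not> isomorphic D1 D2)"
proof -
  have d1: "deterministic D1" and d2: "deterministic D2"
    using det_nice(1)[OF df1 i1 fin1 reach1 sf1] det_nice(1)[OF df2 i2 fin2 reach2 sf2] by auto
  have nc1: "nice c D1" for c using det_nice(2)[OF df1 i1 fin1 reach1 sf1] .
  have nc2: "nice c D2" for c using det_nice(2)[OF df2 i2 fin2 reach2 sf2] .
  have mc1: "minimal_det CoBuchi D1" unfolding minimal_det_def
    using d1 minimal_co[OF L1(1) al(1)] al(3) by presburger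
  have mc2: "minimal_det CoBuchi D2" unfolding minimal_det_def
    using d2 minimal_co[OF L2(1) al(2)] al(4) by presburger
  have mb1: "minimal_det Buchi D1" unfolding minimal_det_def
    using d1 minimal_bu[OF L1(2) al(1)] al(3) by presburger
  have mb2: "minimal_det Buchi D2" unfolding minimal_det_def
    using d2 minimal_bu[OF L2(2) al(2)] al(4) by presburger
  have e1: "lang CoBuchi D1 = lang CoBuchi D2" unfolding L1 L2 wd ..
  have e2: "lang Buchi D1 = lang Buchi D2" unfolding L1 L2 wd ..
  have a: "alph D1 = alph D2" using al by simp
  show ?thesis
    apply (rule conjI)
     apply (rule exI[of _ D1], rule exI[of _ D2], intro conjI)
                apply (fact d1 d2 a e1 e2 nc1 nc2 mc1 mc2 mb1 mb2 noniso)+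
    apply (rule exI[of _ D1], rule exI[of _ D2], intro conjI)
    apply (fact d1 d2 a e1 e2 nc1 nc2 mc1 mc2 mb1 mb2 noniso)+
    done
qed

end
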